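(* Let $k\ge 2$ be an integer and let $G=\Theta(2,2,2k)$. Then $P_\ell(G,m)=P(G,m)$ for every integer $m\ge 3$.
   Context: $\Theta(l_1,l_2,l_3)$ denotes the graph consisting of two end vertices joined by three internally disjoint paths of lengths $l_1,l_2,l_3$. All graphs are finite and simple. For a list assignment $L$ (assigning a set $L(v)$ of colors to each vertex $v$), $P(G,L)$ is the number of proper colorings $f$ of $G$ with $f(v)\in L(v)$ for all $v$; an $m$-assignment has $|L(v)|=m$ for all $v$. $P(G,m)$ is the chromatic polynomial of $G$, and the list color function $P_\ell(G,m)$ is the minimum of $P(G,L)$ over all $m$-assignments $L$ for $G$. *)

theory Defs
  imports Main "HOL-Library.FuncSet"
begin

definition simple_graph :: "'a set \<Rightarrow> 'a set set \<Rightarrow> bool" where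
  "simple_graph V E \<longleftrightarrow> finite V \<and> (\<forall>e\<in>E. e \<subseteq> V \<and> card e = 2)"

definition list_colorings :: "'a set \<Rightarrow> 'a set set \<Rightarrow> ('a \<Rightarrow> nat set) \<Rightarrow> ('a \<Rightarrow> nat) set" where
  "list_colorings V E L =
     {f \<in> extensional V. (\<forall>v\<in>V. f v \<in> L v) \<and> (\<forall>u v. {u, v} \<in> E \<longrightarrow> f u \<noteq> f v)}"

definition P_list :: "'a set \<Rightarrow> 'a set set \<Rightarrow> ('a \<Rightarrow> nat set) \<Rightarrow> nat" where
  "P_list V E L = card (list_colorings V E L)"

definition chrom :: "'a set \<Rightarrow> 'a set set \<Rightarrow> nat \<Rightarrow> nat" where
  "chrom V E m = P_list V E (\<lambda>_. {1..m})"

definition m_assignment :: "'a set \<Rightarrow> nat \<Rightarrow> ('a \<Rightarrow> nat set) \<Rightarrow> bool" where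
  "m_assignment V m L \<longleftrightarrow> (\<forall>v\<in>V. finite (L v) \<and> card (L v) = m)"

definition list_color_fun :: "'a set \<Rightarrow> 'a set set \<Rightarrow> nat \<Rightarrow> nat" where
  "list_color_fun V E m = Min {P_list V E L | L. m_assignment V m L}"

(* Theta(l1,l2,l3): end vertices (0,0) and (0,1); path i (i = 1,2,3) of length l_i
   has internal vertices (i,1),...,(i,l_i - 1). *)
definition theta_path_vertex :: "nat \<Rightarrow> nat \<Rightarrow> nat \<Rightarrow> nat \<times> nat" where
  "theta_path_vertex l i j = (if j = 0 then (0,0) else if j = l then (0,1) else (i,j))"

definition theta_V :: "nat \<Rightarrow> nat \<Rightarrow> nat \<Rightarrow> (nat \<times> nat) set" where
  "theta_V l1 l2 l3 = {(0,0),(0,1)} \<union> {(1,j) | j. 1 \<le> j \<and> j < l1}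
      \<union> {(2,j) | j. 1 \<le> j \<and> j < l2} \<union> {(3,j) | j. 1 \<le> j \<and> j < l3}"

definition theta_E :: "nat \<Rightarrow> nat \<Rightarrow> nat \<Rightarrow> (nat \<times> nat) set set" where
  "theta_E l1 l2 l3 =
     (\<Union>(i,l)\<in>{(1,l1),(2,l2),(3,l3)}.
        {{theta_path_vertex l i j, theta_path_vertex l i (j+1)} | j. j < l})"

end

theory Submission
  imports Defs
begin

fun dd :: "nat \<Rightarrow> nat \<Rightarrow> int" where
  "dd m 0 = 0"
| "dd m (Suc j) = (int m - 1) * dd m j + (-1)^j"

lemma dd_id: "int m * dd m j + (-1)^j = (int m - 1)^j"
  by (induction j) (auto simp: algebra_simps)

lemma dd_nonneg: assumes "m \<ge> 3" shows "dd m j \<ge> 0"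
proof -
  have "(int m - 1)^j \<ge> 1" using assms by simp
  moreover have "(-1::int)^j \<le> 1" by (cases "even j") auto
  ultimately have "int m * dd m j \<ge> 0" using dd_id[of m j] by linarith
  thus ?thesis using assms by (simp add: zero_le_mult_iff)
qed

lemma dd_pos: assumes "m \<ge> 3" "j \<ge> 1" shows "dd m j \<ge> 1"
proof -
  have "(int m - 1)^j \<ge> (int m - 1)^1" using assms by (intro power_increasing) auto
  hence "(int m - 1)^j \<ge> 2" using assms by simp
  moreover have "(-1::int)^j \<le> 1" by (cases "even j") auto
  ultimately have "int m * dd m j > 0" using dd_id[of m j] by linarith
  thus ?thesis using assms by (simp add: zero_less_mult_iff)
qed

fun cnt :: "(nat \<Rightarrow> nat set) \<Rightarrow> nat \<Rightarrow> nat \<Rightarrow> nat \<Rightarrow> nat" where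
  "cnt Lp 0 a b = (if a = b \<and> a \<in> Lp 0 then 1 else 0)"
| "cnt Lp (Suc j) a b = (if b \<in> Lp (Suc j) then (\<Sum>g\<in>Lp j - {b}. cnt Lp j a g) else 0)"

lemma sum_swap_minus:
  fixes h :: "nat \<Rightarrow> int"
  assumes "finite B" "finite C"
  shows "(\<Sum>b\<in>B. \<Sum>g\<in>C - {b}. h g) = (\<Sum>g\<in>C. h g * int (card (B - {g})))"
proof -
  have "(\<Sum>b\<in>B. \<Sum>g\<in>C - {b}. h g) = (\<Sum>b\<in>B. \<Sum>g\<in>C. if g = b then 0 else h g)"
    using assms by (intro sum.cong refl sum.mono_neutral_cong_right[symmetric]) auto
  also have "\<dots> = (\<Sum>g\<in>C. \<Sum>b\<in>B. if g = b then 0 else h g)" by (rule sum.swap)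
  also have "\<dots> = (\<Sum>g\<in>C. h g * int (card (B - {g})))"
  proof (intro sum.cong refl)
    fix g assume "g \<in> C"
    have "(\<Sum>b\<in>B. if g = b then 0 else h g) = (\<Sum>b\<in>B - {g}. h g)"
      using assms by (intro sum.mono_neutral_cong_right) auto
    also have "\<dots> = h g * int (card (B - {g}))" by simp
    finally show "(\<Sum>b\<in>B. if g = b then 0 else h g) = h g * int (card (B - {g}))" .
  qed
  finally show ?thesis .
qed

lemma sum_ind_bij:
  assumes "bij_betw t A B" "c \<in> B" "finite A"
  shows "(\<Sum>a\<in>A. (if c = t a then 1 else 0::int)) = 1"
proof -
  have "(\<Sum>a\<in>A. (if c = t a then 1 else 0::int)) = (\<Sum>b\<in>B. (if c = b then 1 else 0::int))"
    using sum.reindex_bij_betw[OF assms(1), of "\<lambda>b. if c = b then 1 else 0::int"] by simp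
  also have "\<dots> = 1"
  proof -
    have "finite B" using assms bij_betw_finite by blast
    thus ?thesis using assms by (simp add: sum.delta sum.delta')
  qed
  finally show ?thesis .
qed

lemma cnt_T:
  assumes m3: "m \<ge> 3" and L: "\<And>i. i \<le> j \<Longrightarrow> finite (Lp i) \<and> card (Lp i) = m"
  shows "\<exists>t. bij_betw t (Lp 0) (Lp j) \<and> card {a\<in>Lp 0. t a \<noteq> a} \<le> (\<Sum>i<j. card (Lp i - Lp (Suc i)))
     \<and> (\<forall>a\<in>Lp 0. \<forall>b\<in>Lp j. dd m j + (-1)^j * (if b = t a then 1 else 0) \<le> int (cnt Lp j a b))"
  using L
proof (induction j)
  case 0
  show ?case
    by (rule exI[of _ id]) (auto simp: bij_betw_def)
next
  case (Suc j)
  have Lj: "finite (Lp j)" "card (Lp j) = m" and Ls: "finite (Lp (Suc j))" "card (Lp (Suc j)) = m"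
    and L0: "finite (Lp 0)" "card (Lp 0) = m"
    using Suc.prems[of j] Suc.prems[of "Suc j"] Suc.prems[of 0] by auto
  obtain t where bij: "bij_betw t (Lp 0) (Lp j)"
    and mv: "card {a\<in>Lp 0. t a \<noteq> a} \<le> (\<Sum>i<j. card (Lp i - Lp (Suc i)))"
    and bnd: "\<forall>a\<in>Lp 0. \<forall>b\<in>Lp j. dd m j + (-1)^j * (if b = t a then 1 else 0) \<le> int (cnt Lp j a b)"
    using Suc.IH Suc.prems by auto
  define Mv where "Mv = {a\<in>Lp 0. t a \<notin> Lp (Suc j)}"
  have tMv: "t ` Mv = Lp j - Lp (Suc j)"
  proof
    show "t ` Mv \<subseteq> Lp j - Lp (Suc j)" using bij by (auto simp: Mv_def bij_betw_def)
    show "Lp j - Lp (Suc j) \<subseteq> t ` Mv"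
    proof
      fix x assume x: "x \<in> Lp j - Lp (Suc j)"
      then obtain a where "a \<in> Lp 0" "x = t a" using bij by (auto simp: bij_betw_def)
      thus "x \<in> t ` Mv" using x by (auto simp: Mv_def)
    qed
  qed
  have cMv: "card Mv = card (Lp j - Lp (Suc j))"
  proof -
    have "inj_on t Mv" using bij by (auto simp: Mv_def bij_betw_def intro: inj_on_subset)
    thus ?thesis using tMv card_image by fastforce
  qed
  have cD: "card (Lp j - Lp (Suc j)) = card (Lp (Suc j) - Lp j)"
    using Lj Ls by (simp add: card_Diff_subset_Int Int_commute)
  have fMv: "finite Mv" using L0 by (simp add: Mv_def)
  obtain g where g: "bij_betw g Mv (Lp (Suc j) - Lp j)"
    using finite_same_card_bij[OF fMv, of "Lp (Suc j) - Lp j"] cMv cD Ls by auto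
  define t' where "t' a = (if t a \<in> Lp (Suc j) then t a else g a)" for a
  have inj: "inj_on t' (Lp 0)"
  proof (rule inj_onI)
    fix x y assume xy: "x \<in> Lp 0" "y \<in> Lp 0" "t' x = t' y"
    have tj: "t x \<in> Lp j" "t y \<in> Lp j" using bij xy by (auto simp: bij_betw_def)
    show "x = y"
    proof (cases "t x \<in> Lp (Suc j)"; cases "t y \<in> Lp (Suc j)")
      assume "t x \<in> Lp (Suc j)" "t y \<in> Lp (Suc j)"
      thus ?thesis using xy bij by (auto simp: t'_def bij_betw_def inj_on_def)
    next
      assume a: "t x \<notin> Lp (Suc j)" "t y \<notin> Lp (Suc j)"
      hence "x \<in> Mv" "y \<in> Mv" using xy by (auto simp: Mv_def)
      thus ?thesis using xy a g by (auto simp: t'_def bij_betw_def inj_on_def)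
    next
      assume a: "t x \<in> Lp (Suc j)" "t y \<notin> Lp (Suc j)"
      hence "y \<in> Mv" using xy by (auto simp: Mv_def)
      hence "g y \<notin> Lp j" using g by (auto simp: bij_betw_def)
      thus ?thesis using a xy tj by (auto simp: t'_def)
    next
      assume a: "t x \<notin> Lp (Suc j)" "t y \<in> Lp (Suc j)"
      hence "x \<in> Mv" using xy by (auto simp: Mv_def)
      hence "g x \<notin> Lp j" using g by (auto simp: bij_betw_def)
      thus ?thesis using a xy tj by (auto simp: t'_def)
    qed
  qed
  have img: "t' ` Lp 0 \<subseteq> Lp (Suc j)"
  proof
    fix y assume "y \<in> t' ` Lp 0"
    then obtain x where x: "x \<in> Lp 0" "y = t' x" by auto
    show "y \<in> Lp (Suc j)"
    proof (cases "t x \<in> Lp (Suc j)")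
      case True thus ?thesis using x by (simp add: t'_def)
    next
      case False hence "x \<in> Mv" using x by (simp add: Mv_def)
      thus ?thesis using x g False by (auto simp: t'_def bij_betw_def)
    qed
  qed
  have bij': "bij_betw t' (Lp 0) (Lp (Suc j))"
  proof -
    have "card (t' ` Lp 0) = m" using inj L0 by (simp add: card_image)
    hence "t' ` Lp 0 = Lp (Suc j)" using img Ls by (intro card_subset_eq) auto
    thus ?thesis using inj by (simp add: bij_betw_def)
  qed
  have mv': "card {a\<in>Lp 0. t' a \<noteq> a} \<le> (\<Sum>i<Suc j. card (Lp i - Lp (Suc i)))"
  proof -
    have "{a\<in>Lp 0. t' a \<noteq> a} \<subseteq> {a\<in>Lp 0. t a \<noteq> a} \<union> Mv"
      by (auto simp: t'_def Mv_def)
    hence "card {a\<in>Lp 0. t' a \<noteq> a} \<le> card ({a\<in>Lp 0. t a \<noteq> a} \<union> Mv)"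
      using L0 fMv by (intro card_mono) auto
    also have "\<dots> \<le> card {a\<in>Lp 0. t a \<noteq> a} + card Mv" by (rule card_Un_le)
    also have "\<dots> \<le> (\<Sum>i<Suc j. card (Lp i - Lp (Suc i)))" using mv cMv by simp
    finally show ?thesis .
  qed
  have bnd': "\<forall>a\<in>Lp 0. \<forall>b\<in>Lp (Suc j). dd m (Suc j) + (-1)^(Suc j) * (if b = t' a then 1 else 0) \<le> int (cnt Lp (Suc j) a b)"
  proof (intro ballI)
    fix a b assume a: "a \<in> Lp 0" and b: "b \<in> Lp (Suc j)"
    have ta: "t a \<in> Lp j" using bij a by (auto simp: bij_betw_def)
    have "int (cnt Lp (Suc j) a b) = (\<Sum>c\<in>Lp j - {b}. int (cnt Lp j a c))" using b by simp
    also have "\<dots> \<ge> (\<Sum>c\<in>Lp j - {b}. dd m j + (-1)^j * (if c = t a then 1 else 0))"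
      using bnd a by (intro sum_mono) auto
    finally have s1: "int (cnt Lp (Suc j) a b) \<ge> (\<Sum>c\<in>Lp j - {b}. dd m j + (-1)^j * (if c = t a then 1 else 0))" .
    have s2: "(\<Sum>c\<in>Lp j - {b}. dd m j + (-1)^j * (if c = t a then 1 else 0))
        = int (card (Lp j - {b})) * dd m j + (-1)^j * (if t a \<noteq> b then 1 else 0)"
      using Lj ta by (simp add: sum.distrib sum_distrib_left[symmetric] sum.delta)
    have cb: "card (Lp j - {b}) = (if b \<in> Lp j then m - 1 else m)" using Lj by auto
    have key: "b = t' a \<Longrightarrow> b \<in> Lp j \<Longrightarrow> t a = b"
      using g a by (auto simp: t'_def Mv_def bij_betw_def split: if_splits)
    have key2: "t a = b \<Longrightarrow> t' a = b" using b by (simp add: t'_def)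
    have s3: "int (cnt Lp (Suc j) a b) \<ge> int (card (Lp j - {b})) * dd m j + (-1)^j * (if t a \<noteq> b then 1 else 0)"
      using s1 s2 by simp
    have mm: "int (m - 1) = int m - 1" using m3 by simp
    have distr: "int m * dd m j = (int m - 1) * dd m j + dd m j" by (simp add: algebra_simps)
    show "dd m (Suc j) + (-1)^(Suc j) * (if b = t' a then 1 else 0) \<le> int (cnt Lp (Suc j) a b)"
    proof (cases "even j")
      case True
      have e: "(-1::int)^j = 1" "(-1::int)^(Suc j) = -1" using True by simp_all
      have dS: "dd m (Suc j) = (int m - 1) * dd m j + 1" using e by simp
      have d0: "dd m j \<ge> 0" using dd_nonneg m3 by blast
      show ?thesis
      proof (cases "b \<in> Lp j")
        case True
        hence "card (Lp j - {b}) = m - 1" using cb by simp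
        thus ?thesis using s3 e dS key2 mm by (cases "t a = b") auto
      next
        case False
        hence "card (Lp j - {b}) = m" using cb by simp
        thus ?thesis using s3 e dS key2 distr d0 by (cases "t a = b") auto
      qed
    next
      case False
      have e: "(-1::int)^j = -1" "(-1::int)^(Suc j) = 1" using False by simp_all
      have dS: "dd m (Suc j) = (int m - 1) * dd m j - 1" using e by simp
      have d1: "dd m j \<ge> 1"
      proof -
        have "j \<ge> 1" using False by (cases j) auto
        thus ?thesis using dd_pos m3 by blast
      qed
      show ?thesis
      proof (cases "b \<in> Lp j")
        case True
        hence "card (Lp j - {b}) = m - 1" using cb by simp
        thus ?thesis using s3 e dS key True mm by (cases "t a = b") auto
      next
        case False
        hence "card (Lp j - {b}) = m" using cb by simp
        thus ?thesis using s3 e dS distr d1 by (cases "t a = b"; cases "b = t' a") auto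
      qed
    qed
  qed
  show ?case using bij' mv' bnd' by blast
qed


lemma cnt_colsum:
  assumes m3: "m \<ge> 3" and L0: "finite (Lp 0)" "card (Lp 0) = m"
    and bij: "bij_betw t (Lp 0) (Lp j)"
    and bnd: "\<forall>a\<in>Lp 0. \<forall>b\<in>Lp j. dd m j + (-1)^j * (if b = t a then 1 else 0) \<le> int (cnt Lp j a b)"
    and c: "c \<in> Lp j"
  shows "(int m - 1)^j \<le> (\<Sum>a\<in>Lp 0. int (cnt Lp j a c))"
proof -
  have "(\<Sum>a\<in>Lp 0. int (cnt Lp j a c)) \<ge> (\<Sum>a\<in>Lp 0. dd m j + (-1)^j * (if c = t a then 1 else 0))"
    using bnd c by (intro sum_mono) auto
  also have "(\<Sum>a\<in>Lp 0. dd m j + (-1)^j * (if c = t a then 1 else 0)) = int m * dd m j + (-1)^j * (\<Sum>a\<in>Lp 0. (if c = t a then 1 else 0))"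
    using L0 by (simp add: sum.distrib sum_distrib_left)
  also have "\<dots> = int m * dd m j + (-1)^j" using sum_ind_bij[OF bij c L0(1)] by simp
  also have "\<dots> = (int m - 1)^j" by (rule dd_id)
  finally show ?thesis .
qed

lemma cnt_M:
  assumes m3: "m \<ge> 3" and L: "\<And>i. i \<le> j \<Longrightarrow> finite (Lp i) \<and> card (Lp i) = m"
  shows "int m * (int m - 1)^(Suc j) + (int m - 1)^j * int (\<Sum>i<j. card (Lp i - Lp (Suc i)))
     \<le> (int m - 1) * (\<Sum>a\<in>Lp 0. \<Sum>b\<in>Lp j. int (cnt Lp j a b))"
  using L
proof (induction j)
  case 0
  have L0: "finite (Lp 0)" "card (Lp 0) = m" using 0 by auto
  have "(\<Sum>a\<in>Lp 0. \<Sum>b\<in>Lp 0. int (cnt Lp 0 a b)) = (\<Sum>a\<in>Lp 0. 1)"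
  proof (intro sum.cong refl)
    fix a assume "a \<in> Lp 0"
    thus "(\<Sum>b\<in>Lp 0. int (cnt Lp 0 a b)) = 1" using L0 by (simp add: if_distrib sum.delta sum.delta' cong: if_cong)
  qed
  thus ?case using L0 by simp
next
  case (Suc j)
  have Lj: "finite (Lp j)" "card (Lp j) = m" and Ls: "finite (Lp (Suc j))" "card (Lp (Suc j)) = m"
    and L0: "finite (Lp 0)" "card (Lp 0) = m"
    using Suc.prems[of j] Suc.prems[of "Suc j"] Suc.prems[of 0] by auto
  have IH: "int m * (int m - 1)^(Suc j) + (int m - 1)^j * int (\<Sum>i<j. card (Lp i - Lp (Suc i)))
     \<le> (int m - 1) * (\<Sum>a\<in>Lp 0. \<Sum>b\<in>Lp j. int (cnt Lp j a b))" using Suc by auto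
  obtain t where bij: "bij_betw t (Lp 0) (Lp j)"
    and bnd: "\<forall>a\<in>Lp 0. \<forall>b\<in>Lp j. dd m j + (-1)^j * (if b = t a then 1 else 0) \<le> int (cnt Lp j a b)"
    using cnt_T[OF m3, of j Lp] Suc.prems by auto
  define S where "S = (\<Sum>a\<in>Lp 0. \<Sum>b\<in>Lp j. int (cnt Lp j a b))"
  define D where "D = card (Lp j - Lp (Suc j))"
  have "(\<Sum>a\<in>Lp 0. \<Sum>b\<in>Lp (Suc j). int (cnt Lp (Suc j) a b))
      = (\<Sum>a\<in>Lp 0. \<Sum>b\<in>Lp (Suc j). \<Sum>c\<in>Lp j - {b}. int (cnt Lp j a c))"
    by (intro sum.cong refl) simp
  also have "\<dots> = (\<Sum>a\<in>Lp 0. \<Sum>c\<in>Lp j. int (cnt Lp j a c) * int (card (Lp (Suc j) - {c})))"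
    using Lj Ls by (intro sum.cong refl sum_swap_minus) auto
  also have "\<dots> = (\<Sum>a\<in>Lp 0. \<Sum>c\<in>Lp j. (int m - 1) * int (cnt Lp j a c) + (if c \<in> Lp j - Lp (Suc j) then int (cnt Lp j a c) else 0))"
  proof (intro sum.cong refl)
    fix a c assume "c \<in> Lp j"
    have "card (Lp (Suc j) - {c}) = (if c \<in> Lp (Suc j) then m - 1 else m)" using Ls by auto
    thus "int (cnt Lp j a c) * int (card (Lp (Suc j) - {c})) = (int m - 1) * int (cnt Lp j a c) + (if c \<in> Lp j - Lp (Suc j) then int (cnt Lp j a c) else 0)"
      using m3 `c \<in> Lp j` by (auto simp: algebra_simps of_nat_diff)
  qed
  also have "\<dots> = (int m - 1) * S + (\<Sum>a\<in>Lp 0. \<Sum>c\<in>Lp j. (if c \<in> Lp j - Lp (Suc j) then int (cnt Lp j a c) else 0))"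
    by (simp add: S_def sum.distrib sum_distrib_left)
  finally have eqS: "(\<Sum>a\<in>Lp 0. \<Sum>b\<in>Lp (Suc j). int (cnt Lp (Suc j) a b)) = (int m - 1) * S + (\<Sum>a\<in>Lp 0. \<Sum>c\<in>Lp j. (if c \<in> Lp j - Lp (Suc j) then int (cnt Lp j a c) else 0))" .
  have "(\<Sum>a\<in>Lp 0. \<Sum>c\<in>Lp j. (if c \<in> Lp j - Lp (Suc j) then int (cnt Lp j a c) else 0))
      = (\<Sum>c\<in>Lp j - Lp (Suc j). \<Sum>a\<in>Lp 0. int (cnt Lp j a c))"
  proof -
    have "(\<Sum>a\<in>Lp 0. \<Sum>c\<in>Lp j. (if c \<in> Lp j - Lp (Suc j) then int (cnt Lp j a c) else 0))
        = (\<Sum>a\<in>Lp 0. \<Sum>c\<in>Lp j - Lp (Suc j). int (cnt Lp j a c))"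
    proof (rule sum.cong[OF refl])
      fix a
      have se: "Lp j \<inter> (Lp j - Lp (Suc j)) = Lp j - Lp (Suc j)" by auto
      have "(\<Sum>c\<in>Lp j. (if c \<in> Lp j - Lp (Suc j) then int (cnt Lp j a c) else 0))
          = (\<Sum>c\<in>Lp j \<inter> (Lp j - Lp (Suc j)). int (cnt Lp j a c))"
        using Lj by (simp add: sum.inter_restrict)
      thus "(\<Sum>c\<in>Lp j. (if c \<in> Lp j - Lp (Suc j) then int (cnt Lp j a c) else 0))
          = (\<Sum>c\<in>Lp j - Lp (Suc j). int (cnt Lp j a c))" by (simp only: se)
    qed
    also have "\<dots> = (\<Sum>c\<in>Lp j - Lp (Suc j). \<Sum>a\<in>Lp 0. int (cnt Lp j a c))" by (rule sum.swap)
    finally show ?thesis .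
  qed
  moreover have "(\<Sum>c\<in>Lp j - Lp (Suc j). \<Sum>a\<in>Lp 0. int (cnt Lp j a c)) \<ge> (\<Sum>c\<in>Lp j - Lp (Suc j). (int m - 1)^j)"
    using cnt_colsum[OF m3 L0 bij bnd] by (intro sum_mono) auto
  ultimately have step: "(\<Sum>a\<in>Lp 0. \<Sum>b\<in>Lp (Suc j). int (cnt Lp (Suc j) a b)) \<ge> (int m - 1) * S + int D * (int m - 1)^j"
    using eqS by (simp add: D_def)
  have pos: "int m - 1 \<ge> 0" using m3 by simp
  have "int m * (int m - 1)^(Suc (Suc j)) + (int m - 1)^(Suc j) * int (\<Sum>i<Suc j. card (Lp i - Lp (Suc i)))
      = (int m - 1) * (int m * (int m - 1)^(Suc j) + (int m - 1)^j * int (\<Sum>i<j. card (Lp i - Lp (Suc i)))) + (int m - 1) * (int D * (int m - 1)^j)"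
    by (simp add: D_def algebra_simps)
  also have "\<dots> \<le> (int m - 1) * ((int m - 1) * S) + (int m - 1) * (int D * (int m - 1)^j)"
    using IH pos by (simp add: S_def mult_left_mono)
  also have "\<dots> = (int m - 1) * ((int m - 1) * S + int D * (int m - 1)^j)" by (simp add: algebra_simps)
  also have "\<dots> \<le> (int m - 1) * (\<Sum>a\<in>Lp 0. \<Sum>b\<in>Lp (Suc j). int (cnt Lp (Suc j) a b))"
    using step pos by (intro mult_left_mono) auto
  finally show ?case .
qed


lemma cnt_weighted:
  assumes m3: "m \<ge> 3" and L: "\<And>i. i \<le> j \<Longrightarrow> finite (Lp i) \<and> card (Lp i) = m" and ev: "even j"
    and W: "\<And>a b. a \<in> Lp 0 \<Longrightarrow> b \<in> Lp j \<Longrightarrow> W a b \<ge> wz" and wz: "wz \<ge> 0"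
  shows "\<exists>t. card {a\<in>Lp 0. t a \<noteq> a} \<le> (\<Sum>i<j. card (Lp i - Lp (Suc i))) \<and> (\<forall>a\<in>Lp 0. t a \<in> Lp j) \<and>
     dd m j * (\<Sum>a\<in>Lp 0. \<Sum>b\<in>Lp j. W a b) + (\<Sum>a\<in>Lp 0. W a (t a))
       + wz * ((\<Sum>a\<in>Lp 0. \<Sum>b\<in>Lp j. int (cnt Lp j a b)) - int m * (int m - 1)^j)
     \<le> (\<Sum>a\<in>Lp 0. \<Sum>b\<in>Lp j. W a b * int (cnt Lp j a b))"
proof -
  have L0: "finite (Lp 0)" "card (Lp 0) = m" and Lj: "finite (Lp j)" "card (Lp j) = m"
    using L[of 0] L[of j] by auto
  obtain t where bij: "bij_betw t (Lp 0) (Lp j)"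
    and mv: "card {a\<in>Lp 0. t a \<noteq> a} \<le> (\<Sum>i<j. card (Lp i - Lp (Suc i)))"
    and bnd: "\<forall>a\<in>Lp 0. \<forall>b\<in>Lp j. dd m j + (-1)^j * (if b = t a then 1 else 0) \<le> int (cnt Lp j a b)"
    using cnt_T[OF m3, of j Lp] L by auto
  have tj: "\<forall>a\<in>Lp 0. t a \<in> Lp j" using bij by (auto simp: bij_betw_def)
  have e1: "(-1::int)^j = 1" using ev by simp
  define e where "e a b = dd m j + (if b = t a then 1 else 0)" for a b
  have ce: "\<And>a b. a \<in> Lp 0 \<Longrightarrow> b \<in> Lp j \<Longrightarrow> e a b \<le> int (cnt Lp j a b)"
    using bnd e1 by (simp add: e_def)
  have termwise: "\<And>a b. a \<in> Lp 0 \<Longrightarrow> b \<in> Lp j \<Longrightarrow>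
      W a b * e a b + wz * (int (cnt Lp j a b) - e a b) \<le> W a b * int (cnt Lp j a b)"
  proof -
    fix a b assume ab: "a \<in> Lp 0" "b \<in> Lp j"
    have "wz * (int (cnt Lp j a b) - e a b) \<le> W a b * (int (cnt Lp j a b) - e a b)"
      using ce[OF ab] W[OF ab] by (intro mult_right_mono) auto
    thus "W a b * e a b + wz * (int (cnt Lp j a b) - e a b) \<le> W a b * int (cnt Lp j a b)"
      by (simp add: algebra_simps)
  qed
  have sumA: "(\<Sum>a\<in>Lp 0. \<Sum>b\<in>Lp j. W a b * e a b) = dd m j * (\<Sum>a\<in>Lp 0. \<Sum>b\<in>Lp j. W a b) + (\<Sum>a\<in>Lp 0. W a (t a))"
  proof -
    have "(\<Sum>a\<in>Lp 0. \<Sum>b\<in>Lp j. W a b * e a b) = (\<Sum>a\<in>Lp 0. dd m j * (\<Sum>b\<in>Lp j. W a b) + W a (t a))"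
    proof (rule sum.cong[OF refl])
      fix a assume a: "a \<in> Lp 0"
      have "(\<Sum>b\<in>Lp j. W a b * e a b) = (\<Sum>b\<in>Lp j. dd m j * W a b + (if b = t a then W a b else 0))"
        by (intro sum.cong refl) (simp add: e_def algebra_simps)
      also have "\<dots> = dd m j * (\<Sum>b\<in>Lp j. W a b) + W a (t a)"
        using Lj tj a by (simp add: sum.distrib sum_distrib_left sum.delta)
      finally show "(\<Sum>b\<in>Lp j. W a b * e a b) = dd m j * (\<Sum>b\<in>Lp j. W a b) + W a (t a)" .
    qed
    thus ?thesis by (simp add: sum.distrib sum_distrib_left)
  qed
  have sumE: "(\<Sum>a\<in>Lp 0. \<Sum>b\<in>Lp j. e a b) = int m * (int m - 1)^j"
  proof -
    have "(\<Sum>a\<in>Lp 0. \<Sum>b\<in>Lp j. e a b) = (\<Sum>a\<in>Lp 0. int m * dd m j + 1)"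
    proof (rule sum.cong[OF refl])
      fix a assume a: "a \<in> Lp 0"
      show "(\<Sum>b\<in>Lp j. e a b) = int m * dd m j + 1"
        using Lj tj a by (simp add: e_def sum.distrib sum.delta)
    qed
    also have "\<dots> = int m * (int m * dd m j + 1)" using L0 by simp
    also have "int m * dd m j + 1 = (int m - 1)^j" using dd_id[of m j] e1 by simp
    finally show ?thesis .
  qed
  have "(\<Sum>a\<in>Lp 0. \<Sum>b\<in>Lp j. W a b * int (cnt Lp j a b))
      \<ge> (\<Sum>a\<in>Lp 0. \<Sum>b\<in>Lp j. W a b * e a b + wz * (int (cnt Lp j a b) - e a b))"
    using termwise by (intro sum_mono) auto
  also have "(\<Sum>a\<in>Lp 0. \<Sum>b\<in>Lp j. W a b * e a b + wz * (int (cnt Lp j a b) - e a b))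
      = (\<Sum>a\<in>Lp 0. \<Sum>b\<in>Lp j. W a b * e a b) + wz * ((\<Sum>a\<in>Lp 0. \<Sum>b\<in>Lp j. int (cnt Lp j a b)) - (\<Sum>a\<in>Lp 0. \<Sum>b\<in>Lp j. e a b))"
    by (simp add: sum.distrib sum_distrib_left sum_subtractf algebra_simps)
  finally show ?thesis using sumA sumE mv tj by (intro exI[of _ t]) auto
qed


lemma cnt_two:
  assumes "a \<in> Lp 0" "b \<in> Lp 2" "finite (Lp 0)" "finite (Lp 1)"
  shows "cnt Lp 2 a b = card (Lp 1 - {a, b})"
proof -
  have c1: "cnt Lp 1 a c = (if c \<in> Lp 1 \<and> c \<noteq> a then 1 else 0)" for c
  proof -
    have "(\<Sum>d\<in>Lp 0 - {c}. (if a = d \<and> a \<in> Lp 0 then 1 else 0::nat)) = (\<Sum>d\<in>Lp 0 - {c}. (if a = d then 1 else 0))"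
      using assms(1) by (intro sum.cong) auto
    also have "\<dots> = (if a \<in> Lp 0 - {c} then 1 else 0)" using assms(3) by (simp add: sum.delta)
    finally have "(\<Sum>d\<in>Lp 0 - {c}. (if a = d \<and> a \<in> Lp 0 then 1 else 0::nat)) = (if a \<in> Lp 0 - {c} then 1 else 0)" .
    thus ?thesis using assms(1) by (auto simp: One_nat_def)
  qed
  have "cnt Lp 2 a b = (\<Sum>c\<in>Lp 1 - {b}. cnt Lp 1 a c)"
    using assms by (simp add: numeral_2_eq_2)
  also have "\<dots> = (\<Sum>c\<in>Lp 1 - {b}. if c \<noteq> a then 1 else 0)"
    by (intro sum.cong refl) (simp only: c1, auto)
  also have "\<dots> = card {c\<in>Lp 1 - {b}. c \<noteq> a}"
    using assms by (simp add: sum.inter_filter[symmetric])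
  also have "{c\<in>Lp 1 - {b}. c \<noteq> a} = Lp 1 - {a, b}" by auto
  finally show ?thesis .
qed

lemma sum_indicator_card:
  assumes "finite A"
  shows "(\<Sum>a\<in>A. (if P a then 1 else 0::int)) = int (card {a\<in>A. P a})"
  using assms by (simp add: sum.inter_filter[symmetric])

lemma card_minus_pair:
  assumes "finite S" "card S = m"
  shows "card (S - {a, b}) \<ge> m - 2" "card (S - {a}) \<ge> m - 1"
proof -
  have "card (S - {a, b}) \<ge> card S - card {a, b}" using diff_card_le_card_Diff[of "{a,b}" S] by simp
  moreover have "card {a, b} \<le> 2" by (simp add: card_insert_le_m1)
  ultimately show "card (S - {a, b}) \<ge> m - 2" using assms by linarith
  show "card (S - {a}) \<ge> m - 1" using assms by (simp add: card_Diff_singleton_if)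
qed


lemma cnt_M':
  assumes m3: "m \<ge> 3" and L: "\<And>i. i \<le> j \<Longrightarrow> finite (Lp i) \<and> card (Lp i) = m"
  shows "int m * (int m - 1)^j + (int m - 1)^(j - 1) * int (\<Sum>i<j. card (Lp i - Lp (Suc i)))
     \<le> (\<Sum>a\<in>Lp 0. \<Sum>b\<in>Lp j. int (cnt Lp j a b))"
proof (cases j)
  case 0
  thus ?thesis using cnt_M[OF m3 L, of 0] m3 by simp
next
  case (Suc j')
  have pos: "int m - 1 > 0" using m3 by simp
  have "(int m - 1) * (int m * (int m - 1)^j + (int m - 1)^(j - 1) * int (\<Sum>i<j. card (Lp i - Lp (Suc i))))
     = int m * (int m - 1)^(Suc j) + (int m - 1)^j * int (\<Sum>i<j. card (Lp i - Lp (Suc i)))"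
    using Suc by (simp add: algebra_simps)
  also have "\<dots> \<le> (int m - 1) * (\<Sum>a\<in>Lp 0. \<Sum>b\<in>Lp j. int (cnt Lp j a b))" by (rule cnt_M[OF m3 L]) auto
  finally show ?thesis using pos by (simp add: mult_le_cancel_left_pos)
qed

lemma c4_bound:
  fixes L0 La Lb Lw :: "nat set"
  assumes m3: "m \<ge> 3"
    and L0: "finite L0" "card L0 = m" and La: "finite La" "card La = m"
    and Lb: "finite Lb" "card Lb = m" and Lw: "finite Lw" "card Lw = m"
  shows "int m * (int m - 1) * (int m ^ 2 - 3 * int m + 3)
     \<le> (\<Sum>a\<in>L0. \<Sum>b\<in>Lw. int (card (La - {a,b}) * card (Lb - {a,b})))"
proof -
  define Lq where "Lq i = (if i = 0 then L0 else if i = 1 then La else Lw)" for i :: nat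
  define Lr where "Lr i = (if i = 0 then L0 else if i = 1 then Lb else Lw)" for i :: nat
  have Lq: "\<And>i. i \<le> 2 \<Longrightarrow> finite (Lq i) \<and> card (Lq i) = m" using L0 La Lw by (auto simp: Lq_def)
  have Lr: "\<And>i. i \<le> 2 \<Longrightarrow> finite (Lr i) \<and> card (Lr i) = m" using L0 Lb Lw by (auto simp: Lr_def)
  define W where "W a b = int (card (Lb - {a,b}))" for a b
  have Wge: "\<And>a b. a \<in> Lq 0 \<Longrightarrow> b \<in> Lq 2 \<Longrightarrow> W a b \<ge> int m - 2"
  proof -
    fix a b
    have "m - 2 \<le> card (Lb - {a, b})" using card_minus_pair(1)[OF Lb] by blast
    thus "W a b \<ge> int m - 2" using m3 unfolding W_def by linarith
  qed
  obtain t where X: "card {a\<in>Lq 0. t a \<noteq> a} \<le> (\<Sum>i<2. card (Lq i - Lq (Suc i)))"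
    and tw: "\<forall>a\<in>Lq 0. t a \<in> Lq 2"
    and main: "dd m 2 * (\<Sum>a\<in>Lq 0. \<Sum>b\<in>Lq 2. W a b) + (\<Sum>a\<in>Lq 0. W a (t a))
       + (int m - 2) * ((\<Sum>a\<in>Lq 0. \<Sum>b\<in>Lq 2. int (cnt Lq 2 a b)) - int m * (int m - 1)^2)
     \<le> (\<Sum>a\<in>Lq 0. \<Sum>b\<in>Lq 2. W a b * int (cnt Lq 2 a b))"
    using cnt_weighted[where m=m and j=2 and Lp=Lq and W=W and wz="int m - 2", OF m3 Lq _ Wge] m3 by auto
  define Xn where "Xn = card {a\<in>L0. t a \<noteq> a}"
  define G where "G = (\<Sum>i<2. card (Lq i - Lq (Suc i)))"
  have XG: "Xn \<le> G" using X by (simp add: Xn_def G_def Lq_def)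
  have q0: "Lq 0 = L0" "Lq 2 = Lw" "Lq 1 = La" by (auto simp: Lq_def)
  have r0: "Lr 0 = L0" "Lr 2 = Lw" "Lr 1 = Lb" by (auto simp: Lr_def)
  have dd2: "dd m 2 = int m - 2" by (simp add: numeral_2_eq_2)
  have rhs: "(\<Sum>a\<in>Lq 0. \<Sum>b\<in>Lq 2. W a b * int (cnt Lq 2 a b))
      = (\<Sum>a\<in>L0. \<Sum>b\<in>Lw. int (card (La - {a,b}) * card (Lb - {a,b})))"
    using cnt_two[of _ Lq] q0 Lq[of 0] Lq[of 1] by (intro sum.cong) (auto simp: W_def)
  have sW: "(\<Sum>a\<in>Lq 0. \<Sum>b\<in>Lq 2. W a b) = (\<Sum>a\<in>Lr 0. \<Sum>b\<in>Lr 2. int (cnt Lr 2 a b))"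
    using cnt_two[of _ Lr] r0 q0 Lr[of 0] Lr[of 1] by (intro sum.cong) (auto simp: W_def)
  have sWge: "(\<Sum>a\<in>Lq 0. \<Sum>b\<in>Lq 2. W a b) \<ge> int m * (int m - 1)^2"
  proof -
    have h: "int m * (int m - 1)^2 + (int m - 1)^(2 - 1) * int (\<Sum>i<2. card (Lr i - Lr (Suc i)))
     \<le> (\<Sum>a\<in>Lr 0. \<Sum>b\<in>Lr 2. int (cnt Lr 2 a b))" by (rule cnt_M'[where m=m and j=2 and Lp=Lr, OF m3 Lr])
    have "0 \<le> (int m - 1)^(2 - 1) * int (\<Sum>i<2. card (Lr i - Lr (Suc i)))" using m3 by (intro mult_nonneg_nonneg) (auto simp del: of_nat_sum)
    thus ?thesis using h sW by linarith
  qed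
  have Mq: "(\<Sum>a\<in>Lq 0. \<Sum>b\<in>Lq 2. int (cnt Lq 2 a b)) \<ge> int m * (int m - 1)^2 + (int m - 1) * int G"
  proof -
    have h: "int m * (int m - 1)^2 + (int m - 1)^(2 - 1) * int (\<Sum>i<2. card (Lq i - Lq (Suc i)))
     \<le> (\<Sum>a\<in>Lq 0. \<Sum>b\<in>Lq 2. int (cnt Lq 2 a b))" by (rule cnt_M'[where m=m and j=2 and Lp=Lq, OF m3 Lq])
    thus ?thesis by (simp only: G_def) simp
  qed
  have sT: "(\<Sum>a\<in>Lq 0. W a (t a)) \<ge> int m * (int m - 1) - int Xn"
  proof -
    have "(\<Sum>a\<in>L0. W a (t a)) \<ge> (\<Sum>a\<in>L0. (int m - 1) - (if t a \<noteq> a then 1 else 0))"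
    proof (rule sum_mono)
      fix a assume a: "a \<in> L0"
      have "m - 2 \<le> card (Lb - {a, t a})" "m - 1 \<le> card (Lb - {a})" using card_minus_pair[OF Lb] by blast+
      thus "(int m - 1) - (if t a \<noteq> a then 1 else 0) \<le> W a (t a)"
      proof (cases "t a = a")
        case True
        hence "{a, t a} = {a}" by simp
        thus ?thesis using m3 \<open>m - 1 \<le> card (Lb - {a})\<close> True unfolding W_def by (simp; linarith)
      next
        case False
        thus ?thesis using m3 \<open>m - 2 \<le> card (Lb - {a, t a})\<close> unfolding W_def by (simp; linarith)
      qed
    qed
    also have "(\<Sum>a\<in>L0. (int m - 1) - (if t a \<noteq> a then 1 else 0)) = int m * (int m - 1) - int Xn"
      using L0 by (simp add: sum_subtractf sum_indicator_card Xn_def)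
    finally show ?thesis using q0 by simp
  qed
  have d0: "int m - 2 \<ge> 1" using m3 by simp
  have "(int m - 2) * (int m * (int m - 1)^2) \<le> (int m - 2) * (\<Sum>a\<in>Lq 0. \<Sum>b\<in>Lq 2. W a b)"
    using sWge d0 by (intro mult_left_mono) auto
  moreover have "(int m - 2) * ((int m - 1) * int G) \<le> (int m - 2) * ((\<Sum>a\<in>Lq 0. \<Sum>b\<in>Lq 2. int (cnt Lq 2 a b)) - int m * (int m - 1)^2)"
    using Mq d0 by (intro mult_left_mono) auto
  moreover have "int Xn \<le> (int m - 2) * ((int m - 1) * int G)"
  proof -
    have "int Xn \<le> int G" using XG by simp
    also have "\<dots> \<le> ((int m - 2) * (int m - 1)) * int G"
    proof -
      have "(1::int) * 1 \<le> (int m - 2) * (int m - 1)" by (rule mult_mono) (use d0 m3 in auto)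
      hence "1 * int G \<le> ((int m - 2) * (int m - 1)) * int G" by (intro mult_right_mono) auto
      thus ?thesis by simp
    qed
    finally show ?thesis by (simp add: algebra_simps)
  qed
  ultimately have "(int m - 2) * (int m * (int m - 1)^2) + int m * (int m - 1) \<le> (\<Sum>a\<in>L0. \<Sum>b\<in>Lw. int (card (La - {a,b}) * card (Lb - {a,b})))"
    using main[unfolded dd2] rhs sT by linarith
  moreover have "int m * (int m - 1) * (int m ^ 2 - 3 * int m + 3) = (int m - 2) * (int m * (int m - 1)^2) + int m * (int m - 1)"
    by (simp add: algebra_simps power2_eq_square)
  ultimately show ?thesis by linarith
qed

lemma main_bound:
  fixes La Lb :: "nat set"
  assumes m3: "m \<ge> 3" and L: "\<And>i. i \<le> n \<Longrightarrow> finite (Lp i) \<and> card (Lp i) = m"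
    and ev: "even n" and n4: "n \<ge> 4"
    and La: "finite La" "card La = m" and Lb: "finite Lb" "card Lb = m"
  shows "dd m n * (int m * (int m - 1) * (int m ^ 2 - 3 * int m + 3)) + int m * (int m - 1)^2
    \<le> (\<Sum>a\<in>Lp 0. \<Sum>b\<in>Lp n. int (card (La - {a,b}) * card (Lb - {a,b})) * int (cnt Lp n a b))"
proof -
  have L0: "finite (Lp 0)" "card (Lp 0) = m" and Ln: "finite (Lp n)" "card (Lp n) = m" using L[of 0] L[of n] by auto
  define A where "A a b = int (card (La - {a,b}) * card (Lb - {a,b}))" for a b
  have Age: "\<And>a b. A a b \<ge> (int m - 2)^2"
  proof -
    fix a b
    have "m - 2 \<le> card (La - {a, b})" "m - 2 \<le> card (Lb - {a, b})" using card_minus_pair(1)[OF La] card_minus_pair(1)[OF Lb] by auto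
    hence h: "int m - 2 \<le> int (card (La - {a, b}))" "int m - 2 \<le> int (card (Lb - {a, b}))" using m3 by linarith+
    have "(int m - 2) * (int m - 2) \<le> int (card (La - {a, b})) * int (card (Lb - {a, b}))"
      by (rule mult_mono) (use h m3 in auto)
    thus "A a b \<ge> (int m - 2)^2" by (simp add: A_def power2_eq_square)
  qed
  have Adiag: "\<And>a. A a a \<ge> (int m - 1)^2"
  proof -
    fix a
    have "m - 1 \<le> card (La - {a})" "m - 1 \<le> card (Lb - {a})" using card_minus_pair(2)[OF La] card_minus_pair(2)[OF Lb] by auto
    hence h: "int m - 1 \<le> int (card (La - {a}))" "int m - 1 \<le> int (card (Lb - {a}))" using m3 by linarith+
    have "(int m - 1) * (int m - 1) \<le> int (card (La - {a})) * int (card (Lb - {a}))"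
      by (rule mult_mono) (use h m3 in auto)
    thus "A a a \<ge> (int m - 1)^2" by (simp add: A_def power2_eq_square)
  qed
  have w0: "(int m - 2)^2 \<ge> 0" by simp
  obtain t where X: "card {a\<in>Lp 0. t a \<noteq> a} \<le> (\<Sum>i<n. card (Lp i - Lp (Suc i)))"
    and main: "dd m n * (\<Sum>a\<in>Lp 0. \<Sum>b\<in>Lp n. A a b) + (\<Sum>a\<in>Lp 0. A a (t a))
       + (int m - 2)^2 * ((\<Sum>a\<in>Lp 0. \<Sum>b\<in>Lp n. int (cnt Lp n a b)) - int m * (int m - 1)^n)
     \<le> (\<Sum>a\<in>Lp 0. \<Sum>b\<in>Lp n. A a b * int (cnt Lp n a b))"
    using cnt_weighted[where m=m and j=n and Lp=Lp and W=A and wz="(int m - 2)^2", OF m3 L ev Age w0] by blast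
  define Xn where "Xn = card {a\<in>Lp 0. t a \<noteq> a}"
  define G where "G = (\<Sum>i<n. card (Lp i - Lp (Suc i)))"
  have XG: "int Xn \<le> int G" unfolding Xn_def G_def using X by (simp only: of_nat_le_iff)
  have C4: "int m * (int m - 1) * (int m ^ 2 - 3 * int m + 3) \<le> (\<Sum>a\<in>Lp 0. \<Sum>b\<in>Lp n. A a b)"
    unfolding A_def by (rule c4_bound[OF m3 L0 La Lb Ln])
  have dn: "dd m n \<ge> 0" using dd_nonneg m3 by blast
  have t1: "dd m n * (int m * (int m - 1) * (int m ^ 2 - 3 * int m + 3)) \<le> dd m n * (\<Sum>a\<in>Lp 0. \<Sum>b\<in>Lp n. A a b)"
    using C4 dn by (rule mult_left_mono)
  have t2: "(\<Sum>a\<in>Lp 0. A a (t a)) \<ge> int m * (int m - 1)^2 - (2 * int m - 3) * int Xn"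
  proof -
    have "(\<Sum>a\<in>Lp 0. A a (t a)) \<ge> (\<Sum>a\<in>Lp 0. (int m - 1)^2 - (2 * int m - 3) * (if t a \<noteq> a then 1 else 0))"
    proof (rule sum_mono)
      fix a assume "a \<in> Lp 0"
      show "(int m - 1)^2 - (2 * int m - 3) * (if t a \<noteq> a then 1 else 0) \<le> A a (t a)"
      proof (cases "t a = a")
        case True thus ?thesis using Adiag[of a] by simp
      next
        case False
        have "(int m - 1)^2 - (2 * int m - 3) = (int m - 2)^2" by (simp add: power2_eq_square algebra_simps)
        thus ?thesis using Age[of a "t a"] False by simp
      qed
    qed
    also have "(\<Sum>a\<in>Lp 0. (int m - 1)^2 - (2 * int m - 3) * (if t a \<noteq> a then 1 else 0))
        = int m * (int m - 1)^2 - (2 * int m - 3) * int Xn"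
      using L0 by (simp add: sum_subtractf sum_distrib_left[symmetric] sum_indicator_card Xn_def)
    finally show ?thesis .
  qed
  have Mge: "(\<Sum>a\<in>Lp 0. \<Sum>b\<in>Lp n. int (cnt Lp n a b)) - int m * (int m - 1)^n \<ge> (int m - 1)^(n - 1) * int G"
    using cnt_M'[where m=m and j=n and Lp=Lp, OF m3 L] by (simp add: G_def)
  have coef: "(int m - 2)^2 * (int m - 1)^(n - 1) \<ge> 2 * int m - 3"
  proof -
    have "(int m - 1)^(n - 1) \<ge> (int m - 1)^2" using m3 n4 by (intro power_increasing) auto
    moreover have "(int m - 2)^2 \<ge> 1"
    proof -
      have "(1::int) * 1 \<le> (int m - 2) * (int m - 2)" by (rule mult_mono) (use m3 in auto)
      thus ?thesis by (simp add: power2_eq_square)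
    qed
    ultimately have "(int m - 2)^2 * (int m - 1)^(n - 1) \<ge> 1 * (int m - 1)^2"
      by (intro mult_mono) auto
    moreover have "(int m - 1)^2 \<ge> 2 * int m - 3"
    proof -
      have "(int m - 1)^2 - (2 * int m - 3) = (int m - 2)^2" by (simp add: power2_eq_square algebra_simps)
      thus ?thesis by (smt (verit) zero_le_power2)
    qed
    ultimately show ?thesis by simp
  qed
  have t3: "(int m - 2)^2 * ((\<Sum>a\<in>Lp 0. \<Sum>b\<in>Lp n. int (cnt Lp n a b)) - int m * (int m - 1)^n) \<ge> (2 * int m - 3) * int Xn"
  proof -
    have "(2 * int m - 3) * int Xn \<le> (2 * int m - 3) * int G" using XG m3 by (intro mult_left_mono) auto
    also have "\<dots> \<le> ((int m - 2)^2 * (int m - 1)^(n - 1)) * int G" using coef by (intro mult_right_mono) auto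
    also have "\<dots> = (int m - 2)^2 * ((int m - 1)^(n - 1) * int G)" by (simp add: algebra_simps)
    also have "\<dots> \<le> (int m - 2)^2 * ((\<Sum>a\<in>Lp 0. \<Sum>b\<in>Lp n. int (cnt Lp n a b)) - int m * (int m - 1)^n)"
      using Mge by (intro mult_left_mono) auto
    finally show ?thesis .
  qed
  have "dd m n * (int m * (int m - 1) * (int m ^ 2 - 3 * int m + 3)) + int m * (int m - 1)^2
     \<le> (\<Sum>a\<in>Lp 0. \<Sum>b\<in>Lp n. A a b * int (cnt Lp n a b))"
    using main t1 t2 t3 by linarith
  thus ?thesis unfolding A_def by (simp only:)
qed

definition pcol :: "(nat \<Rightarrow> nat set) \<Rightarrow> nat \<Rightarrow> nat \<Rightarrow> nat \<Rightarrow> (nat \<Rightarrow> nat) set" where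
  "pcol Lp j a b = {h \<in> extensional {0..j}. (\<forall>i\<le>j. h i \<in> Lp i) \<and> (\<forall>i<j. h i \<noteq> h (Suc i)) \<and> h 0 = a \<and> h j = b}"

lemma pcol_sub: "pcol Lp j a b \<subseteq> PiE {0..j} Lp"
  by (auto simp: pcol_def PiE_def Pi_def)

lemma pcol_finite: "(\<And>i. i \<le> j \<Longrightarrow> finite (Lp i)) \<Longrightarrow> finite (pcol Lp j a b)"
  by (rule finite_subset[OF pcol_sub]) (auto intro!: finite_PiE)

lemma pcol_zero: "pcol Lp 0 a b = (if a = b \<and> a \<in> Lp 0 then {(\<lambda>i. if i = 0 then a else undefined)} else {})"
proof -
  have "h \<in> extensional {0..0} \<Longrightarrow> h = (\<lambda>i. if i = 0 then h 0 else undefined)" for h :: "nat \<Rightarrow> nat"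
    by (auto simp: extensional_def)
  thus ?thesis by (auto simp: pcol_def extensional_def)
qed

lemma pcol_Suc:
  "pcol Lp (Suc j) a b = (if b \<in> Lp (Suc j) then (\<Union>c\<in>Lp j - {b}. (\<lambda>h. h(Suc j := b)) ` pcol Lp j a c) else {})"
proof (cases "b \<in> Lp (Suc j)")
  case False thus ?thesis by (auto simp: pcol_def)
next
  case True
  have "pcol Lp (Suc j) a b = (\<Union>c\<in>Lp j - {b}. (\<lambda>h. h(Suc j := b)) ` pcol Lp j a c)"
  proof
    show "pcol Lp (Suc j) a b \<subseteq> (\<Union>c\<in>Lp j - {b}. (\<lambda>h. h(Suc j := b)) ` pcol Lp j a c)"
    proof
      fix h assume h: "h \<in> pcol Lp (Suc j) a b"
      define h' where "h' = h(Suc j := undefined)"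
      have "h' \<in> pcol Lp j a (h j)"
        using h by (auto simp: pcol_def h'_def extensional_def)
      moreover have "h j \<in> Lp j - {b}" using h by (auto simp: pcol_def)
      moreover have "h = h'(Suc j := b)" using h by (auto simp: pcol_def h'_def)
      ultimately show "h \<in> (\<Union>c\<in>Lp j - {b}. (\<lambda>h. h(Suc j := b)) ` pcol Lp j a c)" by blast
    qed
    show "(\<Union>c\<in>Lp j - {b}. (\<lambda>h. h(Suc j := b)) ` pcol Lp j a c) \<subseteq> pcol Lp (Suc j) a b"
    proof
      fix x assume "x \<in> (\<Union>c\<in>Lp j - {b}. (\<lambda>h. h(Suc j := b)) ` pcol Lp j a c)"
      then obtain c h where c: "c \<in> Lp j" "c \<noteq> b" and h: "h \<in> pcol Lp j a c" and x: "x = h(Suc j := b)" by auto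
      show "x \<in> pcol Lp (Suc j) a b"
        using h c True unfolding x pcol_def extensional_def
        by (auto simp: less_Suc_eq le_Suc_eq)
    qed
  qed
  thus ?thesis using True by simp
qed

lemma pcol_card:
  assumes "\<And>i. i \<le> j \<Longrightarrow> finite (Lp i)"
  shows "card (pcol Lp j a b) = cnt Lp j a b"
  using assms
proof (induction j arbitrary: b)
  case 0
  thus ?case by (auto simp: pcol_zero)
next
  case (Suc j)
  show ?case
  proof (cases "b \<in> Lp (Suc j)")
    case False thus ?thesis by (simp add: pcol_Suc)
  next
    case True
    have fin: "finite (Lp j)" using Suc.prems by auto
    have inj: "inj_on (\<lambda>h. h(Suc j := b)) (pcol Lp j a c)" for c
    proof (rule inj_onI)
      fix h1 h2 assume h: "h1 \<in> pcol Lp j a c" "h2 \<in> pcol Lp j a c" "h1(Suc j := b) = h2(Suc j := b)"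
      have "h1 (Suc j) = undefined" "h2 (Suc j) = undefined" using h(1,2) by (auto simp: pcol_def extensional_def)
      thus "h1 = h2" using h(3) by (metis fun_upd_triv fun_upd_upd)
    qed
    have "card (pcol Lp (Suc j) a b) = card (\<Union>c\<in>Lp j - {b}. (\<lambda>h. h(Suc j := b)) ` pcol Lp j a c)"
      using True by (simp add: pcol_Suc)
    also have "\<dots> = (\<Sum>c\<in>Lp j - {b}. card ((\<lambda>h. h(Suc j := b)) ` pcol Lp j a c))"
    proof (rule card_UN_disjoint)
      show "finite (Lp j - {b})" using fin by simp
      show "\<forall>c\<in>Lp j - {b}. finite ((\<lambda>h. h(Suc j := b)) ` pcol Lp j a c)"
        using Suc.prems by (auto intro!: pcol_finite)
      show "\<forall>c\<in>Lp j - {b}. \<forall>c'\<in>Lp j - {b}. c \<noteq> c' \<longrightarrow>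
          (\<lambda>h. h(Suc j := b)) ` pcol Lp j a c \<inter> (\<lambda>h. h(Suc j := b)) ` pcol Lp j a c' = {}"
        by (auto simp: pcol_def dest!: fun_cong[where x=j])
    qed
    also have "\<dots> = (\<Sum>c\<in>Lp j - {b}. cnt Lp j a c)"
    proof (rule sum.cong[OF refl])
      fix c assume "c \<in> Lp j - {b}"
      have "card ((\<lambda>h. h(Suc j := b)) ` pcol Lp j a c) = card (pcol Lp j a c)" using inj by (rule card_image)
      also have "\<dots> = cnt Lp j a c" using Suc by auto
      finally show "card ((\<lambda>h. h(Suc j := b)) ` pcol Lp j a c) = cnt Lp j a c" .
    qed
    finally show ?thesis using True by simp
  qed
qed

definition pth :: "nat \<Rightarrow> nat \<Rightarrow> nat \<times> nat" where
  "pth n i = theta_path_vertex n 3 i"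

definition pos :: "nat \<Rightarrow> nat \<times> nat \<Rightarrow> nat" where
  "pos n v = (if v = (0,0) then 0 else if v = (0,1) then n else snd v)"

lemma pth_simps:
  "pth n 0 = (0,0)" "n > 0 \<Longrightarrow> pth n n = (0,1)" "0 < i \<Longrightarrow> i < n \<Longrightarrow> pth n i = (3,i)"
  by (auto simp: pth_def theta_path_vertex_def)

lemma V_eq: "theta_V 2 2 n = {(0,0),(0,1),(1,1),(2,1)} \<union> {(3,j) |j. 1 \<le> j \<and> j < n}"
proof -
  have "{(1::nat,j) |j. 1 \<le> j \<and> j < (2::nat)} = {(1,1)}" by auto
  moreover have "{(2::nat,j) |j. 1 \<le> j \<and> j < (2::nat)} = {(2,1)}" by auto
  ultimately show ?thesis by (auto simp: theta_V_def)
qed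

lemma pth_in_V: "i \<le> n \<Longrightarrow> n > 0 \<Longrightarrow> pth n i \<in> theta_V 2 2 n"
  by (cases "i = 0"; cases "i = n") (auto simp: V_eq pth_simps)

lemma pth_ne: "pth n i \<noteq> (1,1)" "pth n i \<noteq> (2,1)"
  by (auto simp: pth_def theta_path_vertex_def)

lemma pos_pth: "i \<le> n \<Longrightarrow> n > 0 \<Longrightarrow> pos n (pth n i) = i"
  by (cases "i = 0"; cases "i = n") (auto simp: pos_def pth_simps)

lemma V_cases: "v \<in> theta_V 2 2 n \<Longrightarrow> n > 0 \<Longrightarrow> v = (1,1) \<or> v = (2,1) \<or> (pos n v \<le> n \<and> pth n (pos n v) = v)"
  by (auto simp: V_eq pos_def pth_simps)

lemma E_iff: "e \<in> theta_E 2 2 n \<longleftrightarrow>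
   e = {(0,0),(1,1)} \<or> e = {(1,1),(0,1)} \<or> e = {(0,0),(2,1)} \<or> e = {(2,1),(0,1)} \<or> (\<exists>j<n. e = {pth n j, pth n (Suc j)})"
proof -
  have l2: "j < (2::nat) \<longleftrightarrow> j = 0 \<or> j = 1" for j by auto
  have "theta_E 2 2 n = {{theta_path_vertex 2 1 j, theta_path_vertex 2 1 (j+1)} | j. j < 2}
     \<union> {{theta_path_vertex 2 2 j, theta_path_vertex 2 2 (j+1)} | j. j < 2}
     \<union> {{theta_path_vertex n 3 j, theta_path_vertex n 3 (j+1)} | j. j < n}"
    by (auto simp: theta_E_def)
  moreover have "{{theta_path_vertex 2 1 j, theta_path_vertex 2 1 (j+1)} | j. j < (2::nat)} = {{(0,0),(1,1)}, {(1,1),(0,1)}}"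
  proof -
    have "{{theta_path_vertex 2 1 j, theta_path_vertex 2 1 (j+1)} | j. j < (2::nat)}
        = (\<lambda>j. {theta_path_vertex 2 1 j, theta_path_vertex 2 1 (j+1)}) ` {0, 1}" by (auto simp: l2)
    thus ?thesis by (simp add: theta_path_vertex_def)
  qed
  moreover have "{{theta_path_vertex 2 2 j, theta_path_vertex 2 2 (j+1)} | j. j < (2::nat)} = {{(0,0),(2,1)}, {(2,1),(0,1)}}"
  proof -
    have "{{theta_path_vertex 2 2 j, theta_path_vertex 2 2 (j+1)} | j. j < (2::nat)}
        = (\<lambda>j. {theta_path_vertex 2 2 j, theta_path_vertex 2 2 (j+1)}) ` {0, 1}" by (auto simp: l2)
    thus ?thesis by (simp add: theta_path_vertex_def)
  qed
  moreover have "{{theta_path_vertex n 3 j, theta_path_vertex n 3 (j+1)} | j. j < n} = {{pth n j, pth n (Suc j)} | j. j < n}"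
    by (simp add: pth_def)
  ultimately have "theta_E 2 2 n = {{(0,0),(1,1)}, {(1,1),(0,1)}} \<union> {{(0,0),(2,1)}, {(2,1),(0,1)}} \<union> {{pth n j, pth n (Suc j)} | j. j < n}"
    by simp
  thus ?thesis by blast
qed


lemma doubleton_neq: "{u, v} = {p, q} \<Longrightarrow> g p \<noteq> g q \<Longrightarrow> g u \<noteq> g v"
  by (auto simp: doubleton_eq_iff)

lemma count_formula:
  fixes L :: "nat \<times> nat \<Rightarrow> nat set"
  assumes n2: "n \<ge> 2" and fin: "\<forall>v\<in>theta_V 2 2 n. finite (L v)"
  shows "card (list_colorings (theta_V 2 2 n) (theta_E 2 2 n) L)
    = (\<Sum>a\<in>L (0,0). \<Sum>b\<in>L (0,1). card (L (1,1) - {a,b}) * card (L (2,1) - {a,b}) * cnt (\<lambda>i. L (pth n i)) n a b)"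
proof -
  define V where "V = theta_V 2 2 n"
  define E where "E = theta_E 2 2 n"
  define Lp where "Lp i = L (pth n i)" for i
  have n0: "n > 0" using n2 by simp
  have uV: "(0,0) \<in> V" "(0,1) \<in> V" "(1,1) \<in> V" "(2,1) \<in> V" by (auto simp: V_def V_eq)
  have finL: "finite (L v)" if "v \<in> V" for v using fin that by (simp add: V_def)
  have finLp: "\<And>i. i \<le> n \<Longrightarrow> finite (Lp i)" using finL pth_in_V n0 by (simp add: Lp_def V_def)
  have Eu: "{(0,0),(1,1)} \<in> E" "{(1,1),(0,1)} \<in> E" "{(0,0),(2,1)} \<in> E" "{(2,1),(0,1)} \<in> E"
    unfolding E_def E_iff by blast+
  have Ep: "j < n \<Longrightarrow> {pth n j, pth n (Suc j)} \<in> E" for j unfolding E_def E_iff by blast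
  define T where "T = (SIGMA x:(L (0,0) \<times> L (0,1)). pcol Lp n (fst x) (snd x) \<times> ((L (1,1) - {fst x, snd x}) \<times> (L (2,1) - {fst x, snd x})))"
  define Phi where "Phi f = ((f (0,0), f (0,1)), (\<lambda>i. if i \<le> n then f (pth n i) else undefined), f (1,1), f (2,1))"
    for f :: "nat \<times> nat \<Rightarrow> nat"
  define Psi where "Psi x = (\<lambda>v. if v \<in> V then (if v = (1,1) then fst (snd (snd x)) else if v = (2,1) then snd (snd (snd x))
      else fst (snd x) (pos n v)) else undefined)"
    for x :: "(nat \<times> nat) \<times> (nat \<Rightarrow> nat) \<times> nat \<times> nat"
  let ?C = "list_colorings V E L"
  have bij: "bij_betw Phi ?C T"
  proof (rule bij_betw_byWitness[where f'=Psi])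
    show "\<forall>f\<in>?C. Psi (Phi f) = f"
    proof
      fix f assume f: "f \<in> ?C"
      show "Psi (Phi f) = f"
      proof
        fix v
        show "Psi (Phi f) v = f v"
        proof (cases "v \<in> V")
          case False
          have "f \<in> extensional V" using f by (simp add: list_colorings_def)
          hence "f v = undefined" using False by (rule extensional_arb)
          thus ?thesis using False by (simp add: Psi_def)
        next
          case True
          from V_cases[OF True[unfolded V_def] n0]
          show ?thesis using True by (auto simp: Psi_def Phi_def)
        qed
      qed
    qed
    show "\<forall>x\<in>T. Phi (Psi x) = x"
    proof
      fix x assume x: "x \<in> T"
      obtain a b h ca cb where xe: "x = ((a,b),h,ca,cb)" by (metis prod.collapse)
      have h: "h \<in> pcol Lp n a b" and ca: "ca \<in> L (1,1)" and cb: "cb \<in> L (2,1)" using x by (auto simp: T_def xe)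
      have hh: "(\<lambda>i. if i \<le> n then Psi x (pth n i) else undefined) = h"
      proof
        fix i show "(if i \<le> n then Psi x (pth n i) else undefined) = h i"
          using h pth_in_V[of i n] n0 pos_pth[of i n] pth_ne[of n i]
          by (auto simp: Psi_def xe pcol_def extensional_def V_def)
      qed
      have "Psi x (0,0) = a" "Psi x (0,1) = b"
        using h uV pos_pth[of 0 n] pos_pth[of n n] n0 by (auto simp: Psi_def xe pcol_def pos_def)
      moreover have "Psi x (1,1) = ca" "Psi x (2,1) = cb" using uV by (auto simp: Psi_def xe)
      ultimately have "Phi (Psi x) = ((a,b),h,ca,cb)" using hh unfolding Phi_def by (simp only: xe)
      thus "Phi (Psi x) = x" using xe by simp
    qed
    show "Phi ` ?C \<subseteq> T"
    proof
      fix y assume "y \<in> Phi ` ?C"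
      then obtain f where f: "f \<in> ?C" and y: "y = Phi f" by auto
      have fL: "\<And>v. v \<in> V \<Longrightarrow> f v \<in> L v" and fE: "\<And>u v. {u,v} \<in> E \<Longrightarrow> f u \<noteq> f v"
        using f by (auto simp: list_colorings_def)
      have h: "(\<lambda>i. if i \<le> n then f (pth n i) else undefined) \<in> pcol Lp n (f (0,0)) (f (0,1))"
        unfolding pcol_def
      proof (intro CollectI conjI allI impI)
        show "(\<lambda>i. if i \<le> n then f (pth n i) else undefined) \<in> extensional {0..n}" by (auto simp: extensional_def)
        fix i
        show "i \<le> n \<Longrightarrow> (if i \<le> n then f (pth n i) else undefined) \<in> Lp i"
          using fL pth_in_V n0 by (auto simp: Lp_def V_def)
        show "i < n \<Longrightarrow> (if i \<le> n then f (pth n i) else undefined) \<noteq> (if Suc i \<le> n then f (pth n (Suc i)) else undefined)"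
        proof -
          assume i: "i < n"
          have "f (pth n i) \<noteq> f (pth n (Suc i))" using fE[OF Ep[OF i]] .
          thus ?thesis using i by simp
        qed
      next
        show "(if 0 \<le> n then f (pth n 0) else undefined) = f (0,0)" by (simp add: pth_simps)
        show "(if n \<le> n then f (pth n n) else undefined) = f (0,1)" using n0 by (simp add: pth_simps)
      qed
      have "f (0,0) \<noteq> f (1,1)" "f (1,1) \<noteq> f (0,1)" "f (0,0) \<noteq> f (2,1)" "f (2,1) \<noteq> f (0,1)"
        using fE[OF Eu(1)] fE[OF Eu(2)] fE[OF Eu(3)] fE[OF Eu(4)] by auto
      moreover have "f (1,1) \<in> L (1,1)" "f (2,1) \<in> L (2,1)" using fL uV by auto
      ultimately have "f (1,1) \<in> L (1,1) - {f (0,0), f (0,1)}" "f (2,1) \<in> L (2,1) - {f (0,0), f (0,1)}" by auto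
      moreover have "f (0,0) \<in> L (0,0)" "f (0,1) \<in> L (0,1)" using fL uV by auto
      ultimately show "y \<in> T" using h by (simp add: T_def y Phi_def)
    qed
    show "Psi ` T \<subseteq> ?C"
    proof
      fix g assume "g \<in> Psi ` T"
      then obtain x where x: "x \<in> T" and g: "g = Psi x" by auto
      obtain a b h ca cb where xe: "x = ((a,b),h,ca,cb)" by (metis prod.collapse)
      have h: "h \<in> pcol Lp n a b" and ca: "ca \<in> L (1,1) - {a,b}" and cb: "cb \<in> L (2,1) - {a,b}"
        and ab: "a \<in> L (0,0)" "b \<in> L (0,1)" using x by (auto simp: T_def xe)
      have gp: "g (pth n i) = h i" if "i \<le> n" for i
        using that pth_in_V[OF that n0] pth_ne[of n i] pos_pth[OF that n0] by (simp add: g Psi_def xe V_def)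
      have g0: "g (0,0) = a" and g1: "g (0,1) = b"
        using gp[of 0] gp[of n] h n0 by (auto simp: pth_simps pcol_def)
      have ga: "g (1,1) = ca" and gb: "g (2,1) = cb" using uV by (auto simp: g Psi_def xe)
      show "g \<in> ?C"
        unfolding list_colorings_def
      proof (intro CollectI conjI ballI allI impI)
        show "g \<in> extensional V" by (auto simp: g Psi_def extensional_def)
        fix v assume v: "v \<in> V"
        show "g v \<in> L v"
        proof -
          have "v = (1,1) \<or> v = (2,1) \<or> (pos n v \<le> n \<and> pth n (pos n v) = v)" using V_cases v n0 by (simp add: V_def)
          moreover have "pos n v \<le> n \<Longrightarrow> h (pos n v) \<in> Lp (pos n v)" using h by (auto simp: pcol_def)
          ultimately show ?thesis using ga gb ca cb gp[of "pos n v"] by (auto simp: Lp_def)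
        qed
      next
        fix u v assume e: "{u, v} \<in> E"
        hence "{u,v} = {(0,0),(1,1)} \<or> {u,v} = {(1,1),(0,1)} \<or> {u,v} = {(0,0),(2,1)} \<or> {u,v} = {(2,1),(0,1)} \<or> (\<exists>j<n. {u,v} = {pth n j, pth n (Suc j)})"
          by (simp add: E_def E_iff)
        thus "g u \<noteq> g v"
        proof (elim disjE exE conjE)
          fix j assume j: "j < n" and uv: "{u,v} = {pth n j, pth n (Suc j)}"
          have "h j \<noteq> h (Suc j)" using h j by (auto simp: pcol_def)
          moreover have "g (pth n j) = h j" "g (pth n (Suc j)) = h (Suc j)" using gp j by auto
          ultimately show ?thesis using doubleton_neq[OF uv, of g] by simp
        next
          assume uv: "{u,v} = {(0,0),(1,1)}"
          show ?thesis using ca g0 ga by (intro doubleton_neq[OF uv]) auto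
        next
          assume uv: "{u,v} = {(1,1),(0,1)}"
          show ?thesis using ca g1 ga by (intro doubleton_neq[OF uv]) auto
        next
          assume uv: "{u,v} = {(0,0),(2,1)}"
          show ?thesis using cb g0 gb by (intro doubleton_neq[OF uv]) auto
        next
          assume uv: "{u,v} = {(2,1),(0,1)}"
          show ?thesis using cb g1 gb by (intro doubleton_neq[OF uv]) auto
        qed
      qed
    qed
  qed
  have "card ?C = card T" using bij by (rule bij_betw_same_card)
  also have "card T = (\<Sum>x\<in>L (0,0) \<times> L (0,1). card (pcol Lp n (fst x) (snd x)) * (card (L (1,1) - {fst x, snd x}) * card (L (2,1) - {fst x, snd x})))"
    unfolding T_def using finL uV finLp
    by (subst card_SigmaI) (auto simp: card_cartesian_product intro!: pcol_finite)
  also have "\<dots> = (\<Sum>a\<in>L (0,0). \<Sum>b\<in>L (0,1). card (L (1,1) - {a,b}) * card (L (2,1) - {a,b}) * cnt Lp n a b)"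
    by (simp add: sum.cartesian_product pcol_card[OF finLp] algebra_simps case_prod_unfold)
  moreover have "Lp = (\<lambda>i. L (pth n i))" by (rule ext) (simp add: Lp_def)
  ultimately show ?thesis by (simp add: V_def E_def)
qed

lemma cnt_uniform:
  assumes S: "finite S" "card S = m" and a: "a \<in> S"
  shows "b \<in> S \<Longrightarrow> int (cnt (\<lambda>_. S) j a b) = dd m j + (-1)^j * (if a = b then 1 else 0)"
proof (induction j arbitrary: b)
  case 0 thus ?case using a by simp
next
  case (Suc j)
  have "S \<noteq> {}" using Suc.prems by auto
  hence "0 < card S" using S(1) card_gt_0_iff by blast
  hence c1: "m \<ge> 1" using S(2) by simp
  have "card (S - {b}) = m - 1" using S Suc.prems by simp
  hence c2: "int (card (S - {b})) = int m - 1" using c1 by simp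
  have fin: "int (card (S - {b})) * dd m j + (-1)^j * (if a \<in> S - {b} then 1 else 0) = dd m (Suc j) + (-1)^(Suc j) * (if a = b then 1 else 0)"
    unfolding c2 using a by (cases "a = b") simp_all
  have "int (cnt (\<lambda>_. S) (Suc j) a b) = (\<Sum>c\<in>S - {b}. int (cnt (\<lambda>_. S) j a c))" using Suc.prems by simp
  also have "\<dots> = (\<Sum>c\<in>S - {b}. dd m j + (-1)^j * (if a = c then 1 else 0))"
    by (rule sum.cong[OF refl]) (use Suc.IH in blast)
  also have "\<dots> = int (card (S - {b})) * dd m j + (-1)^j * (if a \<in> S - {b} then 1 else 0)"
    using S(1) by (simp add: sum.distrib sum_distrib_left[symmetric] sum.delta')
  also note fin
  finally show ?case .
qed
lemma uniform_value:
  assumes m3: "m \<ge> 3" and S: "finite S" "card S = m" and ev: "even n"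
  shows "(\<Sum>a\<in>S. \<Sum>b\<in>S. int (card (S - {a,b}) * card (S - {a,b})) * int (cnt (\<lambda>_. S) n a b))
    = dd m n * (int m * (int m - 1) * (int m ^ 2 - 3 * int m + 3)) + int m * (int m - 1)^2"
proof -
  have e1: "(-1::int)^n = 1" using ev by simp
  define X where "X = (int m - 1)^2 * (dd m n + 1)"
  define Y where "Y = (int m - 2)^2 * dd m n"
  have trm: "int (card (S - {a,b}) * card (S - {a,b})) * int (cnt (\<lambda>_. S) n a b) = (if a = b then X else Y)"
    if ab: "a \<in> S" "b \<in> S" for a b
  proof (cases "a = b")
    case True
    have "card (S - {a,b}) = m - 1" using True ab S by simp
    hence c: "int (card (S - {a,b})) = int m - 1" using m3 by simp
    have "int (cnt (\<lambda>_. S) n a b) = dd m n + 1" using True cnt_uniform[OF S ab(1) ab(2), of n] e1 by simp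
    thus ?thesis using True c by (simp add: X_def power2_eq_square)
  next
    case False
    have "card (S - {a,b}) = card S - card {a,b}" using ab S by (intro card_Diff_subset) auto
    hence "card (S - {a,b}) = m - 2" using False S by simp
    hence c: "int (card (S - {a,b})) = int m - 2" using m3 by simp
    have "int (cnt (\<lambda>_. S) n a b) = dd m n" using False cnt_uniform[OF S ab(1) ab(2), of n] by simp
    thus ?thesis using False c by (simp add: Y_def power2_eq_square)
  qed
  have inner: "(\<Sum>b\<in>S. (if a = b then X else Y)) = X + (int m - 1) * Y" if a: "a \<in> S" for a
  proof -
    have "(\<Sum>b\<in>S. (if a = b then X else Y)) = X + (\<Sum>b\<in>S - {a}. (if a = b then X else Y))"
      using S a by (simp add: sum.remove)
    also have "(\<Sum>b\<in>S - {a}. (if a = b then X else Y)) = (\<Sum>b\<in>S - {a}. Y)" by (intro sum.cong) auto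
    also have "\<dots> = (int m - 1) * Y"
    proof -
      have "card (S - {a}) = m - 1" using S a by simp
      hence "int (card (S - {a})) = int m - 1" using m3 by simp
      thus ?thesis by simp
    qed
    finally show ?thesis .
  qed
  have "(\<Sum>a\<in>S. \<Sum>b\<in>S. int (card (S - {a,b}) * card (S - {a,b})) * int (cnt (\<lambda>_. S) n a b))
      = (\<Sum>a\<in>S. \<Sum>b\<in>S. (if a = b then X else Y))" using trm by (intro sum.cong refl) auto
  also have "\<dots> = (\<Sum>a\<in>S. X + (int m - 1) * Y)" using inner by (intro sum.cong refl) auto
  also have "\<dots> = int m * (X + (int m - 1) * Y)" using S by simp
  also have "\<dots> = dd m n * (int m * (int m - 1) * (int m ^ 2 - 3 * int m + 3)) + int m * (int m - 1)^2"
    by (simp add: X_def Y_def power2_eq_square algebra_simps)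
  finally show ?thesis .
qed

lemma theta_V_finite: "finite (theta_V 2 2 n)"
proof -
  have "{(3::nat,j) |j. 1 \<le> j \<and> j < n} = (\<lambda>j. (3,j)) ` {1..<n}" by auto
  thus ?thesis by (simp add: V_eq)
qed

lemma P_formula_int:
  fixes L :: "nat \<times> nat \<Rightarrow> nat set"
  assumes n2: "n \<ge> 2" and fin: "\<forall>v\<in>theta_V 2 2 n. finite (L v)"
  shows "int (P_list (theta_V 2 2 n) (theta_E 2 2 n) L)
    = (\<Sum>a\<in>L (0,0). \<Sum>b\<in>L (pth n n). int (card (L (1,1) - {a,b}) * card (L (2,1) - {a,b})) * int (cnt (\<lambda>i. L (pth n i)) n a b))"
proof -
  have "pth n n = (0,1)" using n2 by (simp add: pth_simps)
  thus ?thesis using count_formula[OF n2 fin] by (simp add: P_list_def)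
qed

theorem theorem11:
  fixes k m :: nat
  assumes "k \<ge> 2" and "m \<ge> 3"
  shows "list_color_fun (theta_V 2 2 (2*k)) (theta_E 2 2 (2*k)) m
         = chrom (theta_V 2 2 (2*k)) (theta_E 2 2 (2*k)) m"
proof -
  define n where "n = 2 * k"
  define V where "V = theta_V 2 2 n"
  define E where "E = theta_E 2 2 n"
  have m3: "m \<ge> 3" by fact
  have n4: "n \<ge> 4" and ev: "even n" and n2: "n \<ge> 2" and n0: "n > 0" using assms by (auto simp: n_def)
  define B where "B = dd m n * (int m * (int m - 1) * (int m ^ 2 - 3 * int m + 3)) + int m * (int m - 1)^2"
  have lower: "B \<le> int (P_list V E L)" if L: "m_assignment V m L" for L
  proof -
    have finL: "\<forall>v\<in>V. finite (L v)" and cL: "\<forall>v\<in>V. card (L v) = m" using L by (auto simp: m_assignment_def)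
    have uV: "(0,0) \<in> V" "(0,1) \<in> V" "(1,1) \<in> V" "(2,1) \<in> V" by (auto simp: V_def V_eq)
    have Lp: "\<And>i. i \<le> n \<Longrightarrow> finite (L (pth n i)) \<and> card (L (pth n i)) = m"
      using finL cL pth_in_V n0 by (auto simp: V_def)
    have p0: "pth n 0 = (0,0)" by (simp add: pth_simps)
    have "B \<le> (\<Sum>a\<in>L (pth n 0). \<Sum>b\<in>L (pth n n). int (card (L (1,1) - {a,b}) * card (L (2,1) - {a,b})) * int (cnt (\<lambda>i. L (pth n i)) n a b))"
      unfolding B_def
      by (rule main_bound[where Lp="\<lambda>i. L (pth n i)", OF m3 Lp ev n4]) (use finL cL uV in auto)
    also have "\<dots> = int (P_list V E L)"
      using P_formula_int[OF n2 finL[unfolded V_def]] p0 by (simp add: V_def E_def)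
    finally show ?thesis .
  qed
  define S :: "nat set" where "S = {1..m}"
  have S: "finite S" "card S = m" by (auto simp: S_def)
  have unif_assign: "m_assignment V m (\<lambda>_. S)" using S by (simp add: m_assignment_def)
  have exact: "int (P_list V E (\<lambda>_. S)) = B"
  proof -
    have "int (P_list V E (\<lambda>_. S)) = (\<Sum>a\<in>S. \<Sum>b\<in>S. int (card (S - {a,b}) * card (S - {a,b})) * int (cnt (\<lambda>_. S) n a b))"
      using P_formula_int[OF n2, of "\<lambda>_. S"] S by (simp add: V_def E_def)
    also have "\<dots> = B" unfolding B_def by (rule uniform_value[OF m3 S ev])
    finally show ?thesis .
  qed
  have chromB: "int (chrom V E m) = B" using exact by (simp add: chrom_def S_def)
  define Q where "Q = {P_list V E L | L. m_assignment V m L}"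
  have finV: "finite V" by (simp add: V_def theta_V_finite)
  have Qfin: "finite Q"
  proof -
    have "Q \<subseteq> {..m ^ card V}"
    proof
      fix q assume "q \<in> Q"
      then obtain L where L: "m_assignment V m L" and q: "q = P_list V E L" by (auto simp: Q_def)
      have sub: "list_colorings V E L \<subseteq> PiE V L"
      proof
        fix f assume "f \<in> list_colorings V E L"
        hence "f \<in> extensional V" "\<forall>v\<in>V. f v \<in> L v" by (auto simp: list_colorings_def)
        thus "f \<in> PiE V L" by (simp add: PiE_iff)
      qed
      have fin: "finite (PiE V L)" using finV L by (intro finite_PiE) (auto simp: m_assignment_def)
      have "q \<le> card (PiE V L)" unfolding q P_list_def using card_mono[OF fin sub] .
      also have "card (PiE V L) = (\<Prod>v\<in>V. card (L v))" using finV by (rule card_PiE)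
      also have "\<dots> = (\<Prod>v\<in>V. m)" using L by (intro prod.cong) (auto simp: m_assignment_def)
      also have "\<dots> = m ^ card V" by simp
      finally show "q \<in> {..m ^ card V}" by simp
    qed
    thus ?thesis by (rule finite_subset) simp
  qed
  have "Min Q = chrom V E m"
  proof (rule Min_eqI[OF Qfin])
    fix y assume "y \<in> Q"
    then obtain L where L: "m_assignment V m L" and y: "y = P_list V E L" by (auto simp: Q_def)
    have "int (chrom V E m) \<le> int y" using lower[OF L] chromB y by simp
    thus "chrom V E m \<le> y" by simp
  next
    show "chrom V E m \<in> Q" unfolding Q_def chrom_def S_def[symmetric] using unif_assign by blast
  qed
  thus ?thesis by (simp add: list_color_fun_def Q_def V_def E_def n_def)
qed

end
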